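(* Let $C$ be an $(n,k)$ linear code over $H(\mathbb{Z})_{1+e_1+e_2}$. If $C$ corrects all errors of Lipschitz weight $2$ or less, then $(3^2)^{n-k}\ge 32n^2-24n+1$.
   Context: $H(\mathbb{Z})=\{a_0+a_1e_1+a_2e_2+a_3e_3:a_i\in\mathbb{Z}\}$ (Lipschitz integers) with quaternion multiplication $e_1^2=e_2^2=e_3^2=-1$, $e_1e_2=-e_2e_1=e_3$, $e_3e_1=-e_1e_3=e_2$, $e_2e_3=-e_3e_2=e_1$; $N(q)=a_0^2+a_1^2+a_2^2+a_3^2$. Right congruence: $q_1\equiv_r q_2 \pmod\pi$ iff $q_1-q_2=\delta\pi$ for some $\delta\in H(\mathbb{Z})$; $H(\mathbb{Z})_\pi=H(\mathbb{Z})/H(\mathbb{Z})\pi$, which has $N(\pi)^2$ elements (here $N(1+e_1+e_2)=3$). The Lipschitz weight of a class $\gamma$ is $\min\{|a_0|+|a_1|+|a_2|+|a_3| : a_0+a_1e_1+a_2e_2+a_3e_3\in\gamma\}$; the weight of a vector is the sum of the weights of its components. An $(n,k)$ linear code over $H(\mathbb{Z})_\pi$ is an additive subgroup $C\subseteq H(\mathbb{Z})_\pi^n$ such that $H(\mathbb{Z})_\pi^n/C$ has exactly $(N(\pi)^2)^{n-k}$ cosets. $C$ corrects all errors of weight $t$ or less if all vectors of Lipschitz weight at most $t$ lie in pairwise distinct cosets of $C$. *)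

theory Defs
  imports Main "HOL-Library.FuncSet"
begin

text \<open>Lipschitz integers a0 + a1 e1 + a2 e2 + a3 e3.\<close>
datatype lip = Lip int int int int

fun lip_add :: "lip \<Rightarrow> lip \<Rightarrow> lip" where
  "lip_add (Lip a0 a1 a2 a3) (Lip b0 b1 b2 b3) = Lip (a0+b0) (a1+b1) (a2+b2) (a3+b3)"

fun lip_neg :: "lip \<Rightarrow> lip" where
  "lip_neg (Lip a0 a1 a2 a3) = Lip (-a0) (-a1) (-a2) (-a3)"

definition lip_sub :: "lip \<Rightarrow> lip \<Rightarrow> lip" where
  "lip_sub p q = lip_add p (lip_neg q)"

definition lip_zero :: lip where "lip_zero = Lip 0 0 0 0"

text \<open>Quaternion product with e1^2=e2^2=e3^2=-1, e1e2=e3, e2e3=e1, e3e1=e2.\<close>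
fun lip_mult :: "lip \<Rightarrow> lip \<Rightarrow> lip" where
  "lip_mult (Lip a0 a1 a2 a3) (Lip b0 b1 b2 b3) =
     Lip (a0*b0 - a1*b1 - a2*b2 - a3*b3)
         (a0*b1 + a1*b0 + a2*b3 - a3*b2)
         (a0*b2 - a1*b3 + a2*b0 + a3*b1)
         (a0*b3 + a1*b2 - a2*b1 + a3*b0)"

fun lip_norm :: "lip \<Rightarrow> int" where
  "lip_norm (Lip a0 a1 a2 a3) = a0^2 + a1^2 + a2^2 + a3^2"

fun lip_abs :: "lip \<Rightarrow> nat" where
  "lip_abs (Lip a0 a1 a2 a3) = nat \<bar>a0\<bar> + nat \<bar>a1\<bar> + nat \<bar>a2\<bar> + nat \<bar>a3\<bar>"

definition rcong :: "lip \<Rightarrow> lip \<Rightarrow> lip \<Rightarrow> bool" where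
  "rcong pi q1 q2 \<longleftrightarrow> (\<exists>\<delta>. lip_sub q1 q2 = lip_mult \<delta> pi)"

definition cls :: "lip \<Rightarrow> lip \<Rightarrow> lip set" where
  "cls pi q = {p. rcong pi p q}"

definition Hpi :: "lip \<Rightarrow> lip set set" where
  "Hpi pi = range (cls pi)"

definition cls_add :: "lip set \<Rightarrow> lip set \<Rightarrow> lip set" where
  "cls_add A B = {lip_add a b | a b. a \<in> A \<and> b \<in> B}"

definition cls_neg :: "lip set \<Rightarrow> lip set" where
  "cls_neg A = lip_neg ` A"

definition cls_weight :: "lip set \<Rightarrow> nat" where
  "cls_weight \<gamma> = (LEAST w. \<exists>q\<in>\<gamma>. lip_abs q = w)"

definition vecs :: "lip \<Rightarrow> nat \<Rightarrow> (nat \<Rightarrow> lip set) set" where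
  "vecs pi n = PiE {..<n} (\<lambda>_. Hpi pi)"

definition vzero :: "lip \<Rightarrow> nat \<Rightarrow> nat \<Rightarrow> lip set" where
  "vzero pi n = restrict (\<lambda>_. cls pi lip_zero) {..<n}"

definition vadd :: "nat \<Rightarrow> (nat \<Rightarrow> lip set) \<Rightarrow> (nat \<Rightarrow> lip set) \<Rightarrow> nat \<Rightarrow> lip set" where
  "vadd n v w = restrict (\<lambda>i. cls_add (v i) (w i)) {..<n}"

definition vneg :: "nat \<Rightarrow> (nat \<Rightarrow> lip set) \<Rightarrow> nat \<Rightarrow> lip set" where
  "vneg n v = restrict (\<lambda>i. cls_neg (v i)) {..<n}"

definition vweight :: "nat \<Rightarrow> (nat \<Rightarrow> lip set) \<Rightarrow> nat" where
  "vweight n v = (\<Sum>i<n. cls_weight (v i))"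

definition additive_subgroup :: "lip \<Rightarrow> nat \<Rightarrow> (nat \<Rightarrow> lip set) set \<Rightarrow> bool" where
  "additive_subgroup pi n C \<longleftrightarrow> C \<subseteq> vecs pi n \<and> vzero pi n \<in> C \<and>
     (\<forall>v\<in>C. \<forall>w\<in>C. vadd n v w \<in> C) \<and> (\<forall>v\<in>C. vneg n v \<in> C)"

definition coset :: "nat \<Rightarrow> (nat \<Rightarrow> lip set) set \<Rightarrow> (nat \<Rightarrow> lip set) \<Rightarrow> (nat \<Rightarrow> lip set) set" where
  "coset n C v = vadd n v ` C"

definition linear_code :: "lip \<Rightarrow> nat \<Rightarrow> nat \<Rightarrow> (nat \<Rightarrow> lip set) set \<Rightarrow> bool" where
  "linear_code pi n k C \<longleftrightarrow> additive_subgroup pi n C \<and>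
     card (coset n C ` vecs pi n) = (nat (lip_norm pi) ^ 2) ^ (n - k)"

definition corrects :: "lip \<Rightarrow> nat \<Rightarrow> (nat \<Rightarrow> lip set) set \<Rightarrow> nat \<Rightarrow> bool" where
  "corrects pi n C t \<longleftrightarrow>
     (\<forall>v\<in>vecs pi n. \<forall>w\<in>vecs pi n. vweight n v \<le> t \<longrightarrow> vweight n w \<le> t \<longrightarrow> v \<noteq> w \<longrightarrow>
        coset n C v \<noteq> coset n C w)"

end

theory Submission
  imports Defs
begin

definition U9 :: "lip set" where
  "U9 = {Lip 0 0 0 0, Lip 1 0 0 0, Lip (-1) 0 0 0, Lip 0 1 0 0, Lip 0 (-1) 0 0,
         Lip 0 0 1 0, Lip 0 0 (-1) 0, Lip 0 0 0 1, Lip 0 0 0 (-1)}"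

lemma U9_finite: "finite U9" by (simp add: U9_def)

lemma U9_card: "card (U9 - {lip_zero}) = 8"
  by (simp add: U9_def lip_zero_def)

lemma zero_U9: "lip_zero \<in> U9" by (simp add: U9_def lip_zero_def)

lemma U9_abs: "x \<in> U9 \<Longrightarrow> lip_abs x = (if x = lip_zero then 0 else 1)"
  by (auto simp: U9_def lip_zero_def)

definition L :: "nat \<Rightarrow> nat \<Rightarrow> lip list set" where
  "L n t = {xs. length xs = n \<and> set xs \<subseteq> U9 \<and> sum_list (map lip_abs xs) \<le> t}"

lemma L_finite: "finite (L n t)"
proof -
  have "L n t \<subseteq> {xs. set xs \<subseteq> U9 \<and> length xs = n}" by (auto simp: L_def)
  thus ?thesis using finite_lists_length_eq[OF U9_finite] finite_subset by blast
qed

lemma L_0: "L 0 t = {[]}" by (auto simp: L_def)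

lemma L_Suc: "L (Suc n) t = (\<lambda>xs. lip_zero # xs) ` L n t \<union>
   (if t = 0 then {} else (\<lambda>(x,xs). x#xs) ` ((U9 - {lip_zero}) \<times> L n (t-1)))"
proof (intro set_eqI iffI)
  fix ys assume "ys \<in> L (Suc n) t"
  then obtain x xs where ys: "ys = x # xs" and l: "length xs = n" and x: "x \<in> U9"
    and s: "set xs \<subseteq> U9" and w: "lip_abs x + sum_list (map lip_abs xs) \<le> t"
    by (auto simp: L_def length_Suc_conv)
  show "ys \<in> (\<lambda>xs. lip_zero # xs) ` L n t \<union>
   (if t = 0 then {} else (\<lambda>(x,xs). x#xs) ` ((U9 - {lip_zero}) \<times> L n (t-1)))"
  proof (cases "x = lip_zero")
    case True
    then show ?thesis using ys l s w by (auto simp: L_def)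
  next
    case False
    then have "lip_abs x = 1" using U9_abs[OF x] by simp
    then have "t \<noteq> 0" "xs \<in> L n (t-1)" using w l s by (auto simp: L_def)
    then show ?thesis using ys x False by force
  qed
next
  fix ys assume a: "ys \<in> (\<lambda>xs. lip_zero # xs) ` L n t \<union>
   (if t = 0 then {} else (\<lambda>(x,xs). x#xs) ` ((U9 - {lip_zero}) \<times> L n (t-1)))"
  show "ys \<in> L (Suc n) t"
  proof (cases "ys \<in> (\<lambda>xs. lip_zero # xs) ` L n t")
    case True
    then show ?thesis using zero_U9 by (auto simp: L_def lip_zero_def)
  next
    case False
    then obtain x xs where "t \<noteq> 0" "ys = x # xs" "x \<in> U9" "x \<noteq> lip_zero" "xs \<in> L n (t-1)"
      using a by (auto split: if_splits)
    moreover then have "lip_abs x = 1" using U9_abs by simp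
    ultimately show ?thesis by (auto simp: L_def)
  qed
qed

definition c :: "nat \<Rightarrow> nat \<Rightarrow> nat" where "c n t = card (L n t)"

lemma c_Suc: "c (Suc n) t = c n t + (if t = 0 then 0 else 8 * c n (t - 1))"
proof -
  have i1: "inj_on (\<lambda>xs. lip_zero # xs) (L n t)" by (auto simp: inj_on_def)
  have i2: "inj_on (\<lambda>(x,xs). x#xs) ((U9 - {lip_zero}) \<times> L n (t-1))" by (auto simp: inj_on_def)
  have d: "(\<lambda>xs. lip_zero # xs) ` L n t \<inter> (\<lambda>(x,xs). x#xs) ` ((U9 - {lip_zero}) \<times> L n (t-1)) = {}"
    by auto
  show ?thesis
  proof (cases "t = 0")
    case True
    then show ?thesis unfolding c_def L_Suc using card_image[OF i1] by simp
  next
    case False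
    have "card ((\<lambda>xs. lip_zero # xs) ` L n t \<union> (\<lambda>(x,xs). x#xs) ` ((U9 - {lip_zero}) \<times> L n (t-1)))
        = card (L n t) + card ((U9 - {lip_zero}) \<times> L n (t-1))"
      apply (subst card_Un_disjoint)
      using d L_finite U9_finite card_image[OF i1] card_image[OF i2] by auto
    also have "\<dots> = card (L n t) + 8 * card (L n (t-1))"
      by (simp add: card_cartesian_product U9_card)
    finally show ?thesis using False unfolding c_def L_Suc by simp
  qed
qed

lemma c_0: "c 0 t = 1" by (simp add: c_def L_0)

lemma c_t0: "c n 0 = 1" by (induction n) (simp_all add: c_0 c_Suc)
lemma c_t1: "c n 1 = 1 + 8 * n" by (induction n) (simp_all add: c_0 c_Suc c_t0)
lemma c_t2: "c n 2 + 24 * n = 32 * n^2 + 1"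
proof (induction n)
  case (Suc n)
  have "c (Suc n) 2 = c n 2 + 8 * c n 1" by (simp add: c_Suc)
  then show ?case using Suc c_t1[of n] by (simp add: power2_eq_square algebra_simps)
qed (simp add: c_0)

abbreviation "pp \<equiv> Lip 1 1 1 0"

lemma norm_mult_pp: "lip_norm (lip_mult d pp) = 3 * lip_norm d"
  by (cases d) (simp add: power2_eq_square algebra_simps)

lemma U9_diff: "a \<in> U9 \<Longrightarrow> b \<in> U9 \<Longrightarrow> a \<noteq> b \<Longrightarrow> \<not> 3 dvd lip_norm (lip_sub a b)"
  by (auto simp: U9_def lip_sub_def)

lemma cls_self: "q \<in> cls p q"
proof -
  have "lip_sub q q = lip_mult (Lip 0 0 0 0) p"
    by (cases q; cases p) (simp add: lip_sub_def)
  then show ?thesis unfolding cls_def rcong_def by blast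
qed

lemma cls_inj: "a \<in> U9 \<Longrightarrow> b \<in> U9 \<Longrightarrow> cls pp a = cls pp b \<Longrightarrow> a = b"
proof (rule ccontr)
  assume a: "a \<in> U9" "b \<in> U9" "cls pp a = cls pp b" "a \<noteq> b"
  then have "a \<in> cls pp b" using cls_self by metis
  then obtain d where "lip_sub a b = lip_mult d pp" by (auto simp: cls_def rcong_def)
  then have "3 dvd lip_norm (lip_sub a b)" using norm_mult_pp by simp
  then show False using U9_diff a by blast
qed

lemma cls_weight_le: "cls_weight (cls p q) \<le> lip_abs q"
  unfolding cls_weight_def by (rule Least_le) (use cls_self in blast)

definition vecof :: "nat \<Rightarrow> lip list \<Rightarrow> nat \<Rightarrow> lip set" where
  "vecof n xs = restrict (\<lambda>i. cls pp (xs!i)) {..<n}"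

lemma vecof_vecs: "vecof n xs \<in> vecs pp n"
  by (auto simp: vecof_def vecs_def Hpi_def)

lemma vecof_inj: "inj_on (vecof n) (L n t)"
proof (rule inj_onI)
  fix xs ys assume xs: "xs \<in> L n t" and ys: "ys \<in> L n t" and e: "vecof n xs = vecof n ys"
  show "xs = ys"
  proof (rule nth_equalityI)
    show "length xs = length ys" using xs ys by (simp add: L_def)
    fix i assume "i < length xs"
    then have i: "i < n" using xs by (simp add: L_def)
    have "cls pp (xs!i) = cls pp (ys!i)" using fun_cong[OF e, of i] i by (simp add: vecof_def)
    moreover have "xs!i \<in> U9" "ys!i \<in> U9" using xs ys i by (auto simp: L_def)
    ultimately show "xs!i = ys!i" using cls_inj by blast
  qed
qed

lemma vecof_weight: assumes "xs \<in> L n t" shows "vweight n (vecof n xs) \<le> t"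
proof -
  have l: "length xs = n" using assms by (simp add: L_def)
  have "vweight n (vecof n xs) = (\<Sum>i<n. cls_weight (cls pp (xs!i)))"
    by (simp add: vweight_def vecof_def)
  also have "\<dots> \<le> (\<Sum>i<n. lip_abs (xs!i))" by (rule sum_mono) (rule cls_weight_le)
  also have "\<dots> = sum_list (map lip_abs xs)"
    using l by (simp add: sum_list_sum_nth atLeast0LessThan)
  also have "\<dots> \<le> t" using assms by (simp add: L_def)
  finally show ?thesis .
qed

theorem theorem7:
  fixes n k :: nat and C :: "(nat \<Rightarrow> lip set) set"
  assumes "k \<le> n"
    and "linear_code (Lip 1 1 1 0) n k C"
    and "corrects (Lip 1 1 1 0) n C 2"
  shows "(int (3^2)) ^ (n - k) \<ge> 32 * int n ^ 2 - 24 * int n + 1"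
proof -
  have cc: "card (coset n C ` vecs pp n) = 9 ^ (n - k)"
    using assms(2) by (simp add: linear_code_def)
  then have fin: "finite (coset n C ` vecs pp n)"
    by (metis card.infinite power_not_zero zero_neq_numeral)
  define V where "V = vecof n ` L n 2"
  have Vs: "V \<subseteq> vecs pp n" using vecof_vecs V_def by auto
  have inj: "inj_on (coset n C) V"
  proof (rule inj_onI)
    fix v w assume v: "v \<in> V" and w: "w \<in> V" and e: "coset n C v = coset n C w"
    have "vweight n v \<le> 2" "vweight n w \<le> 2" using v w vecof_weight V_def by auto
    then show "v = w" using assms(3) e v w Vs unfolding corrects_def by blast
  qed
  have "c n 2 = card V" unfolding c_def V_def using card_image[OF vecof_inj] by simp
  also have "\<dots> = card (coset n C ` V)" using card_image[OF inj] by simp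
  also have "\<dots> \<le> card (coset n C ` vecs pp n)" using fin Vs by (intro card_mono) auto
  finally have "c n 2 \<le> 9 ^ (n - k)" using cc by simp
  then have "int (c n 2) \<le> 9 ^ (n - k)" by (metis of_nat_le_iff of_nat_numeral of_nat_power)
  moreover have "int (c n 2) + 24 * int n = 32 * int n ^ 2 + 1" using c_t2[of n]
    by (metis (mono_tags) of_nat_add of_nat_mult of_nat_numeral of_nat_power of_nat_1)
  ultimately have "32 * int n ^ 2 - 24 * int n + 1 \<le> 9 ^ (n - k)" by linarith
  then show ?thesis by simp
qed

end
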